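(* Let $G$ be a graph and $X,Y\subseteq V(G)$ disjoint such that $(X,Y)$ is induced $M_2$-free. Then for every integer $r\ge1$ there is an equipartition $X=X_1\cup\dots\cup X_r$ and a partition $Y=Y_1\cup\dots\cup Y_{r+1}$ (parts possibly empty) such that $(X_i,Y_j)$ is homogeneous for every $1\le i\le r$ and $1\le j\le r+1$ with $i\ne j$.
   Context: For disjoint $X,Y\subseteq V(G)$, an induced copy of $M_2$ in $(X,Y)$ is an unordered quadruple $x,x',y,y'$ with $x,x'\in X$, $y,y'\in Y$, $(x,y),(x',y')\in E(G)$ and $(x,y'),(x',y)\notin E(G)$; $(X,Y)$ is induced $M_2$-free if it contains no such copy. A pair $(A,B)$ of disjoint vertex sets is homogeneous if the bipartite graph of $G$ between $A$ and $B$ is complete or empty. A partition $\{P_1,\dots,P_r\}$ is an equipartition if $||P_i|-|P_j||\le1$ for all $i,j$. *)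

theory Defs
  imports Main
begin

definition simple_graph :: "'a set \<Rightarrow> ('a \<Rightarrow> 'a \<Rightarrow> bool) \<Rightarrow> bool" where
  "simple_graph V E \<longleftrightarrow> finite V \<and> (\<forall>u v. E u v \<longrightarrow> E v u) \<and> (\<forall>v. \<not> E v v)
     \<and> (\<forall>u v. E u v \<longrightarrow> u \<in> V \<and> v \<in> V)"

definition induced_M2_free :: "('a \<Rightarrow> 'a \<Rightarrow> bool) \<Rightarrow> 'a set \<Rightarrow> 'a set \<Rightarrow> bool" where
  "induced_M2_free E X Y \<longleftrightarrow>
     \<not> (\<exists>x\<in>X. \<exists>x'\<in>X. \<exists>y\<in>Y. \<exists>y'\<in>Y. E x y \<and> E x' y' \<and> \<not> E x y' \<and> \<not> E x' y)"

definition homogeneous :: "('a \<Rightarrow> 'a \<Rightarrow> bool) \<Rightarrow> 'a set \<Rightarrow> 'a set \<Rightarrow> bool" where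
  "homogeneous E A B \<longleftrightarrow> (\<forall>a\<in>A. \<forall>b\<in>B. E a b) \<or> (\<forall>a\<in>A. \<forall>b\<in>B. \<not> E a b)"

definition indexed_partition :: "'a set \<Rightarrow> nat \<Rightarrow> (nat \<Rightarrow> 'a set) \<Rightarrow> bool" where
  "indexed_partition S k P \<longleftrightarrow> (\<Union>i\<in>{1..k}. P i) = S
     \<and> (\<forall>i\<in>{1..k}. \<forall>j\<in>{1..k}. i \<noteq> j \<longrightarrow> P i \<inter> P j = {})"

definition equipartition :: "'a set \<Rightarrow> nat \<Rightarrow> (nat \<Rightarrow> 'a set) \<Rightarrow> bool" where
  "equipartition S k P \<longleftrightarrow> indexed_partition S k P
     \<and> (\<forall>i\<in>{1..k}. \<forall>j\<in>{1..k}. card (P i) \<le> card (P j) + 1)"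

end

theory Submission
  imports Defs
begin

lemma arith_step:
  fixes n r k q :: nat
  assumes r: "r \<ge> 1" and q: "q = n div Suc r"
    and h1: "r*k < (n-q)+r" and h2: "n - q < r*k + r"
  shows "Suc r * k < n + Suc r \<and> n < Suc r * k + Suc r"
proof -
  obtain m where n: "n = Suc r * q + m" and m: "m \<le> r"
    using q by (metis div_mult_mod_eq less_Suc_eq_le mod_less_divisor zero_less_Suc mult.commute)
  have nq: "n - q = r*q + m" using n by simp
  have "r*k < r*(q+2)" using h1 nq m by (simp add: algebra_simps)
  hence k1: "k < q+2" using mult_less_cancel1[of r k "q+2"] by linarith
  have "r*q < r*(k+1)" using h2 nq by (simp add: algebra_simps)
  hence k2: "q \<le> k" using mult_less_cancel1[of r q "k+1"] by linarith
  show ?thesis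
  proof (cases "k = q")
    case True thus ?thesis using n m by simp
  next
    case False
    hence k: "k = q+1" using k1 k2 by simp
    have "r*q + r < r*q + m + r" using h1 nq k by (simp add: algebra_simps)
    hence "m > 0" by simp
    thus ?thesis using n m k by (simp add: algebra_simps)
  qed
qed

lemma blocks:
  fixes c :: "'a \<Rightarrow> nat"
  assumes "r \<ge> 1" "sorted (map c xs)" "distinct xs"
  shows "\<exists>f. (\<forall>x\<in>set xs. f x \<in> {1..r})
    \<and> (\<forall>i\<in>{1..r}. r * card {x\<in>set xs. f x = i} < length xs + r
                   \<and> length xs < r * card {x\<in>set xs. f x = i} + r)
    \<and> (\<forall>x\<in>set xs. \<forall>y\<in>set xs. f x < f y \<longrightarrow> c x \<le> c y)"
  using assms
proof (induction r arbitrary: xs)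
  case 0 thus ?case by simp
next
  case (Suc r)
  show ?case
  proof (cases "r = 0")
    case True
    have "{x\<in>set xs. (\<lambda>_. 1::nat) x = 1} = set xs" by simp
    thus ?thesis using True Suc.prems distinct_card[of xs]
      by (intro exI[of _ "\<lambda>_. 1"]) auto
  next
    case False
    define n where "n = length xs"
    define q where "q = n div Suc r"
    define A where "A = take q xs"
    define B where "B = drop q xs"
    have xsAB: "xs = A @ B" unfolding A_def B_def by simp
    have dA: "distinct A" and dB: "distinct B" and disj: "set A \<inter> set B = {}"
      using Suc.prems(3) xsAB by (metis distinct_append)+
    have sAB: "sorted (map c A @ map c B)" using Suc.prems(2) xsAB by simp
    have sB: "sorted (map c B)" using sAB sorted_append by blast
    have AB_le: "\<forall>x\<in>set A. \<forall>y\<in>set B. c x \<le> c y" using sAB by (auto simp: sorted_append)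
    have lA: "length A = q" unfolding A_def q_def n_def
      by (simp add: min_def) (meson div_le_dividend le_antisym)
    have lB: "length B = n - q" unfolding B_def n_def by simp
    obtain g where g1: "\<forall>x\<in>set B. g x \<in> {1..r}"
      and g2: "\<forall>i\<in>{1..r}. r * card {x\<in>set B. g x = i} < length B + r
                   \<and> length B < r * card {x\<in>set B. g x = i} + r"
      and g3: "\<forall>x\<in>set B. \<forall>y\<in>set B. g x < g y \<longrightarrow> c x \<le> c y"
      using Suc.IH[OF _ sB dB] False by auto
    define f where "f x = (if x \<in> set A then 1 else Suc (g x))" for x
    have setxs: "set xs = set A \<union> set B" using xsAB by simp
    show ?thesis
    proof (intro exI[of _ f] conjI ballI impI)
      fix x assume "x \<in> set xs" thus "f x \<in> {1..Suc r}" using g1 setxs f_def by auto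
    next
      fix x y assume x: "x \<in> set xs" and y: "y \<in> set xs" and "f x < f y"
      thus "c x \<le> c y" using setxs g3 AB_le disj unfolding f_def
        by (auto split: if_splits)
    next
      fix i assume i: "i \<in> {1..Suc r}"
      have "Suc r * card {x\<in>set xs. f x = i} < length xs + Suc r
                   \<and> length xs < Suc r * card {x\<in>set xs. f x = i} + Suc r"
      proof (cases "i = 1")
        case True
        have "{x\<in>set xs. f x = i} = set A" using True setxs f_def g1 by (auto; force)
        hence "card {x\<in>set xs. f x = i} = q" using lA dA distinct_card by metis
        moreover have "Suc r * q \<le> n" "n < Suc r * q + Suc r" unfolding q_def
          using div_times_less_eq_dividend[of n "Suc r"] apply (simp add: mult.commute)
          by (metis add.commute div_mult_mod_eq mod_less_divisor mult.commute nat_add_left_cancel_less zero_less_Suc)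
        ultimately show ?thesis unfolding n_def by simp
      next
        case False
        then obtain j where j: "i = Suc j" "j \<in> {1..r}" using i by (cases i) auto
        have "{x\<in>set xs. f x = i} = {x\<in>set B. g x = j}" using j setxs f_def disj by auto
        thus ?thesis using arith_step[of r q n "card {x\<in>set B. g x = j}"] g2 j lB False
          unfolding q_def n_def by auto
      qed
      thus "Suc r * card {x\<in>set xs. f x = i} < length xs + Suc r"
           "length xs < Suc r * card {x\<in>set xs. f x = i} + Suc r" by auto
    qed
  qed
qed

theorem lemma2p2:
  fixes V :: "'a set" and E :: "'a \<Rightarrow> 'a \<Rightarrow> bool" and X Y :: "'a set" and r :: nat
  assumes "simple_graph V E"
    and "X \<subseteq> V" and "Y \<subseteq> V" and "X \<inter> Y = {}"
    and "induced_M2_free E X Y"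
    and "r \<ge> 1"
  shows "\<exists>XP YP. equipartition X r XP \<and> indexed_partition Y (r + 1) YP
           \<and> (\<forall>i\<in>{1..r}. \<forall>j\<in>{1..r+1}. i \<noteq> j \<longrightarrow> homogeneous E (XP i) (YP j))"
proof -
  have finX: "finite X" and finY: "finite Y"
    using assms(1,2,3) unfolding simple_graph_def by (auto intro: finite_subset)
  define N where "N x = {y\<in>Y. E x y}" for x
  define c where "c x = card (N x)" for x
  have chain: "N x \<subseteq> N x' \<or> N x' \<subseteq> N x" if "x \<in> X" "x' \<in> X" for x x'
    using assms(5) that unfolding induced_M2_free_def N_def by blast
  have cle: "N x \<subseteq> N x'" if "x \<in> X" "x' \<in> X" "c x \<le> c x'" for x x'
  proof (rule ccontr)
    assume nx: "\<not> N x \<subseteq> N x'"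
    hence "N x' \<subset> N x" using chain[OF that(1,2)] by blast
    hence "c x' < c x" unfolding c_def using finY N_def
      by (metis (no_types, lifting) mem_Collect_eq psubset_card_mono rev_finite_subset subsetI)
    thus False using that(3) by simp
  qed
  obtain xs0 where xs0: "set xs0 = X" "distinct xs0" using finite_distinct_list[OF finX] by blast
  define xs where "xs = sort_key c xs0"
  have xs: "set xs = X" "distinct xs" "sorted (map c xs)" using xs0 unfolding xs_def by auto
  obtain f where f1: "\<forall>x\<in>X. f x \<in> {1..r}"
    and f2: "\<forall>i\<in>{1..r}. r * card {x\<in>X. f x = i} < length xs + r
                   \<and> length xs < r * card {x\<in>X. f x = i} + r"
    and f3: "\<forall>x\<in>X. \<forall>y\<in>X. f x < f y \<longrightarrow> c x \<le> c y"
    using blocks[OF assms(6) xs(3) xs(2)] xs(1) by blast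
  define XP where "XP i = {x\<in>X. f x = i}" for i
  define P where "P y j \<longleftrightarrow> j = r+1 \<or> (\<exists>x\<in>X. f x \<le> j \<and> E x y)" for y j
  define g where "g y = (LEAST j. P y j)" for y
  define YP where "YP j = {y\<in>Y. g y = j}" for j
  have Pg: "P y (g y)" for y unfolding g_def by (rule LeastI[of _ "r+1"]) (simp add: P_def)
  have gle: "g y \<le> j" if "P y j" for y j unfolding g_def using that by (rule Least_le)
  have grange: "g y \<in> {1..r+1}" for y
  proof -
    have "g y \<le> r+1" by (rule gle) (simp add: P_def)
    moreover have "g y \<noteq> 0" using Pg[of y] f1 unfolding P_def by fastforce
    ultimately show ?thesis by simp
  qed
  have eq: "equipartition X r XP"
    unfolding equipartition_def indexed_partition_def
  proof (intro conjI ballI impI)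
    show "(\<Union>i\<in>{1..r}. XP i) = X" using f1 unfolding XP_def by auto
  next
    fix i j assume "i \<in> {1..r}" "j \<in> {1..r}" "i \<noteq> j"
    thus "XP i \<inter> XP j = {}" unfolding XP_def by auto
  next
    fix i j assume i: "i \<in> {1..r}" and j: "j \<in> {1..r}"
    have a: "r * card (XP i) < length xs + r" using f2 i unfolding XP_def by blast
    have b: "length xs < r * card (XP j) + r" using f2 j unfolding XP_def by blast
    have "r * card (XP i) < r * (card (XP j) + 2)" using a b by (simp add: algebra_simps)
    hence "card (XP i) < card (XP j) + 2" using mult_less_cancel1 by blast
    thus "card (XP i) \<le> card (XP j) + 1" by simp
  qed
  have ip: "indexed_partition Y (r + 1) YP"
    unfolding indexed_partition_def
  proof (intro conjI ballI impI)
    show "(\<Union>i\<in>{1..r+1}. YP i) = Y" using grange unfolding YP_def by auto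
  next
    fix i j assume "i \<in> {1..r+1}" "j \<in> {1..r+1}" "i \<noteq> j"
    thus "YP i \<inter> YP j = {}" unfolding YP_def by auto
  qed
  have hom: "homogeneous E (XP i) (YP j)"
    if i: "i \<in> {1..r}" and j: "j \<in> {1..r+1}" and ij: "i \<noteq> j" for i j
  proof (cases "i < j")
    case True
    have "\<forall>a\<in>XP i. \<forall>b\<in>YP j. \<not> E a b"
    proof (intro ballI notI)
      fix a b assume a: "a \<in> XP i" and b: "b \<in> YP j" and e: "E a b"
      have "P b i" unfolding P_def using a e unfolding XP_def by auto
      hence "g b \<le> i" by (rule gle)
      thus False using b True unfolding YP_def by simp
    qed
    thus ?thesis unfolding homogeneous_def by blast
  next
    case False
    hence ji: "j < i" using ij by simp
    have "\<forall>a\<in>XP i. \<forall>b\<in>YP j. E a b"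
    proof (intro ballI)
      fix a b assume a: "a \<in> XP i" and b: "b \<in> YP j"
      have "P b j" using Pg[of b] b unfolding YP_def by simp
      moreover have "j \<noteq> r+1" using ji i by simp
      ultimately obtain x where x: "x \<in> X" "f x \<le> j" "E x b" unfolding P_def by blast
      have aX: "a \<in> X" "f a = i" using a unfolding XP_def by auto
      have "c x \<le> c a" using f3 x aX ji by auto
      hence "N x \<subseteq> N a" using cle x aX by blast
      moreover have "b \<in> N x" using x b unfolding N_def YP_def by auto
      ultimately show "E a b" unfolding N_def by auto
    qed
    thus ?thesis unfolding homogeneous_def by blast
  qed
  show ?thesis using eq ip hom by blast
qed

end
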